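(* Let $\mathbb{X}$ be a linearly ordered radicable idempotent semifield, $n\ge1$, $\bm{A},\bm{B}\in\mathbb{X}^{n\times n}$ with $\lambda=\bigoplus_{k=1}^{n}(\mathrm{tr}\,\bm{A}^{k})^{1/k}$ the spectral radius of $\bm{A}$ and $\mathrm{Tr}(\bm{B})\le\mathbb{1}$, $\bm{p}\in\mathbb{X}^n$, $\bm{q}\in\mathbb{X}^n$ a regular vector, and $r\in\mathbb{X}$ with $\lambda\oplus(\bm{q}^{-}\bm{p})^{1/2}\oplus r>\mathbb{0}$. Consider minimizing $\bm{x}^{-}\bm{A}\bm{x}\oplus\bm{x}^{-}\bm{p}\oplus\bm{q}^{-}\bm{x}\oplus r$ over regular $\bm{x}\in\mathbb{X}^n$ subject to $\bm{B}\bm{x}\le\bm{x}$. Then the minimum value is $$\theta=\bigoplus_{k=1}^{n}(\mathrm{tr}\,\bm{S}_{k})^{1/k}\oplus\bigoplus_{k=0}^{n-1}(\bm{q}^{-}\bm{T}_{k}\bm{p})^{1/(k+2)}\oplus r,$$ and all regular solutions are exactly the vectors $\bm{x}=(\theta^{-1}\bm{A}\oplus\bm{B})^{\ast}\bm{u}$, where $\bm{u}$ is any vector with $\theta^{-1}\bm{p}\le\bm{u}\le\theta\big(\bm{q}^{-}(\theta^{-1}\bm{A}\oplus\bm{B})^{\ast}\big)^{-}$.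
   Context: An idempotent semifield is $(\mathbb{X},\oplus,\otimes,\mathbb{0},\mathbb{1})$ where $(\mathbb{X},\oplus,\mathbb{0})$ is a commutative monoid with idempotent addition, $(\mathbb{X}\setminus\{\mathbb{0}\},\otimes,\mathbb{1})$ is an abelian group, and $\otimes$ distributes over $\oplus$; the product sign is omitted. The order is $x\le y$ iff $x\oplus y=y$, assumed linear; "minimum" refers to this order. Radicable means $x^m=a$ is solvable for all $a$ and integers $m\ge1$, so rational powers are defined. Matrix/vector operations use $\oplus,\otimes$; inequalities are entrywise. $\bm{I}$ is the identity matrix, $\bm{A}^0=\bm{I}$. A vector is regular if all entries are nonzero. For a nonzero vector $\bm{x}$ (row or column), $\bm{x}^{-}$ is the transposed vector with entries $x_i^{-1}$ if $x_i\ne\mathbb{0}$ and $\mathbb{0}$ otherwise. $\mathrm{tr}\,\bm{A}=a_{11}\oplus\cdots\oplus a_{nn}$; $\mathrm{Tr}(\bm{A})=\mathrm{tr}\,\bm{A}\oplus\cdots\oplus\mathrm{tr}\,\bm{A}^{n}$; $\bm{A}^{\ast}=\bm{I}\oplus\bm{A}\oplus\cdots\oplus\bm{A}^{n-1}$. For $k=1,\dots,n$, $\bm{S}_k=\bigoplus_{0\le i_1+\cdots+i_k\le n-k}\bm{A}\bm{B}^{i_1}\cdots\bm{A}\bm{B}^{i_k}$ (over nonnegative integers $i_j$); $\bm{T}_0=\bm{B}^{\ast}$ and, for $k=1,\dots,n-1$, $\bm{T}_k=\bigoplus_{0\le i_0+i_1+\cdots+i_k\le n-k-1}\bm{B}^{i_0}\bm{A}\bm{B}^{i_1}\cdots\bm{A}\bm{B}^{i_k}$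 (over nonnegative integers $i_j$). *)

theory Defs
  imports "HOL-Analysis.Finite_Cartesian_Product"
begin

text \<open>Addition (+) plays the role of the idempotent addition, times of the
multiplication; 0 and 1 are the zero and the unit.\<close>

class lin_rad_idem_semifield = comm_semiring_1 + linorder + inverse +
  assumes add_idem: "x + x = x"
    and le_iff_add: "x \<le> y \<longleftrightarrow> x + y = y"
    and right_inverse_nz: "x \<noteq> 0 \<Longrightarrow> x * inverse x = 1"
    and inverse_zero_sf: "inverse 0 = 0"
    and radicable: "0 < m \<Longrightarrow> \<exists>y. y ^ m = a"

text \<open>The m-th root a^(1/m) (unique in a linearly ordered radicable idempotent semifield).\<close>
definition iroot :: "nat \<Rightarrow> 'a::lin_rad_idem_semifield \<Rightarrow> 'a" where
  "iroot m a = (THE y. y ^ m = a)"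

definition regular :: "'a::zero ^ 'n \<Rightarrow> bool" where
  "regular x \<longleftrightarrow> (\<forall>i. x $ i \<noteq> 0)"

text \<open>x^- : entrywise inverse (transposition is implicit, rows and columns are
both represented as 'a^'n); inverse 0 = 0 gives the zero-entry convention.\<close>
definition vinv :: "'a::lin_rad_idem_semifield ^ 'n \<Rightarrow> 'a ^ 'n" where
  "vinv x = (\<chi> i. inverse (x $ i))"

definition vdot :: "'a::lin_rad_idem_semifield ^ 'n::finite \<Rightarrow> 'a ^ 'n \<Rightarrow> 'a" where
  "vdot u v = (\<Sum>i\<in>UNIV. u $ i * v $ i)"

definition smat :: "'a::lin_rad_idem_semifield \<Rightarrow> 'a ^ 'n ^ 'm \<Rightarrow> 'a ^ 'n ^ 'm" where
  "smat c A = (\<chi> i j. c * A $ i $ j)"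

primrec mpow :: "'a::lin_rad_idem_semifield ^ 'n::finite ^ 'n \<Rightarrow> nat \<Rightarrow> 'a ^ 'n ^ 'n" where
  "mpow A 0 = mat 1"
| "mpow A (Suc k) = A ** mpow A k"

primrec mprod :: "('a::lin_rad_idem_semifield ^ 'n::finite ^ 'n) list \<Rightarrow> 'a ^ 'n ^ 'n" where
  "mprod [] = mat 1"
| "mprod (M # Ms) = M ** mprod Ms"

definition tr :: "'a::lin_rad_idem_semifield ^ 'n::finite ^ 'n \<Rightarrow> 'a" where
  "tr A = (\<Sum>i\<in>UNIV. A $ i $ i)"

definition Trc :: "'a::lin_rad_idem_semifield ^ 'n::finite ^ 'n \<Rightarrow> 'a" where
  "Trc A = (\<Sum>k\<in>{1..CARD('n)}. tr (mpow A k))"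

definition kstar :: "'a::lin_rad_idem_semifield ^ 'n::finite ^ 'n \<Rightarrow> 'a ^ 'n ^ 'n" where
  "kstar A = (\<Sum>k\<in>{0..<CARD('n)}. mpow A k)"

definition Smat :: "'a::lin_rad_idem_semifield ^ 'n::finite ^ 'n \<Rightarrow> 'a ^ 'n ^ 'n \<Rightarrow> nat \<Rightarrow> 'a ^ 'n ^ 'n" where
  "Smat A B k = (\<Sum>is\<in>{is. length is = k \<and> sum_list is \<le> CARD('n) - k}.
                   mprod (map (\<lambda>i. A ** mpow B i) is))"

definition Tmat :: "'a::lin_rad_idem_semifield ^ 'n::finite ^ 'n \<Rightarrow> 'a ^ 'n ^ 'n \<Rightarrow> nat \<Rightarrow> 'a ^ 'n ^ 'n" where
  "Tmat A B k = (if k = 0 then kstar B else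
     (\<Sum>(i0, is)\<in>{(i0, is). length is = k \<and> i0 + sum_list is \<le> CARD('n) - k - 1}.
        mpow B i0 ** mprod (map (\<lambda>i. A ** mpow B i) is)))"

end

theory Submission
  imports Defs
begin

context lin_rad_idem_semifield begin

lemma add_max: "x + y = max x y"
proof (cases "x \<le> y")
  case True then show ?thesis using le_iff_add[of x y] by (simp add: max_def)
next
  case False then have "y \<le> x" by simp
  then show ?thesis using le_iff_add[of y x] False by (simp add: max_def add.commute)
qed

lemma zero_least[simp]: "0 \<le> x"
  by (simp add: le_iff_add)

lemma add_le_iff[simp]: "x + y \<le> z \<longleftrightarrow> x \<le> z \<and> y \<le> z"
  by (simp add: add_max)

lemma le_add1[simp]: "x \<le> x + y" by (simp add: add_max)
lemma le_add2[simp]: "y \<le> x + y" by (simp add: add_max)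

lemma mult_right_mono': assumes "a \<le> b" shows "a * c \<le> b * c"
proof -
  have "a * c + b * c = (a + b) * c" by (simp add: distrib_right)
  also have "\<dots> = b * c" using assms le_iff_add[of a b] by simp
  finally show ?thesis using le_iff_add[of "a*c" "b*c"] by simp
qed

lemma mult_left_mono': "a \<le> b \<Longrightarrow> c * a \<le> c * b"
  using mult_right_mono'[of a b c] by (simp add: mult.commute)

lemma mult_mono'': "a \<le> b \<Longrightarrow> c \<le> d \<Longrightarrow> a * c \<le> b * d"
  by (meson mult_left_mono' mult_right_mono' order_trans)

lemma sum_le_iff: "finite S \<Longrightarrow> sum f S \<le> z \<longleftrightarrow> (\<forall>s\<in>S. f s \<le> z)"
  by (induction S rule: finite_induct) auto

lemma mem_le_sum: "finite S \<Longrightarrow> s \<in> S \<Longrightarrow> f s \<le> sum f S"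
  by (induction S rule: finite_induct) (auto intro: order_trans)

lemma sum_mono': "(\<forall>s\<in>S. f s \<le> g s) \<Longrightarrow> sum f S \<le> sum g S"
  by (induction S rule: infinite_finite_induct) (auto intro: order_trans)

lemma sum_attained: "finite S \<Longrightarrow> S \<noteq> {} \<Longrightarrow> \<exists>s\<in>S. sum f S = f s"
proof (induction S rule: finite_induct)
  case (insert x F)
  show ?case
  proof (cases "F = {}")
    case True then show ?thesis by simp
  next
    case False
    then obtain s where "s \<in> F" "sum f F = f s" using insert by auto
    then show ?thesis using insert by (auto simp: add_max max_def)
  qed
qed simp

lemma inv_left: "x \<noteq> 0 \<Longrightarrow> inverse x * x = 1"
  using right_inverse_nz mult.commute by metis

lemma mult_eq_0: "x * y = 0 \<longleftrightarrow> x = 0 \<or> y = 0"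
proof
  assume h: "x * y = 0"
  show "x = 0 \<or> y = 0"
  proof (rule ccontr)
    assume "\<not> (x = 0 \<or> y = 0)"
    then have "y = inverse x * x * y" using inv_left by simp
    also have "\<dots> = 0" using h by (simp add: mult.assoc)
    finally show False using \<open>\<not> (x = 0 \<or> y = 0)\<close> by simp
  qed
qed auto

lemma inverse_nz: "x \<noteq> 0 \<Longrightarrow> inverse x \<noteq> 0"
  by (metis mult_zero_right right_inverse_nz zero_neq_one)

lemma mult_cancel_le: "c \<noteq> 0 \<Longrightarrow> a * c \<le> b * c \<longleftrightarrow> a \<le> b"
proof
  assume c: "c \<noteq> 0" and "a * c \<le> b * c"
  from \<open>a * c \<le> b * c\<close> have "a * c * inverse c \<le> b * c * inverse c" by (rule mult_right_mono')
  then show "a \<le> b" using c by (simp add: mult.assoc right_inverse_nz)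
qed (rule mult_right_mono')

lemma le_mult_inv: "c \<noteq> 0 \<Longrightarrow> a \<le> b * c \<longleftrightarrow> a * inverse c \<le> b"
  using mult_cancel_le[of c "a * inverse c" b] by (simp add: mult.assoc inv_left)

lemma inv_mult_le: "c \<noteq> 0 \<Longrightarrow> inverse c * a \<le> b \<longleftrightarrow> a \<le> c * b"
  using le_mult_inv[of c a b] by (simp add: mult.commute)

lemma inverse_inverse': "inverse (inverse x) = x"
proof (cases "x = 0")
  case True then show ?thesis by (simp add: inverse_zero_sf)
next
  case False
  have "inverse (inverse x) = inverse (inverse x) * (inverse x * x)" using False inv_left by simp
  also have "\<dots> = (inverse (inverse x) * inverse x) * x" by (simp add: mult.assoc)
  also have "\<dots> = x" using inv_left[OF inverse_nz[OF False]] by simp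
  finally show ?thesis .
qed

lemma pow_nz: "x \<noteq> 0 \<Longrightarrow> x ^ k \<noteq> 0"
  by (induction k) (auto simp: mult_eq_0)

lemma pow_mono': "x \<le> y \<Longrightarrow> x ^ k \<le> y ^ k"
  by (induction k) (auto intro: mult_mono'')

lemma one_le_pow: "1 \<le> c \<Longrightarrow> 0 < k \<Longrightarrow> c \<le> c ^ k"
proof (induction k)
  case (Suc k)
  show ?case
  proof (cases k)
    case 0 then show ?thesis by simp
  next
    case (Suc m)
    then have "c \<le> c ^ k" using Suc.IH Suc.prems by simp
    have "c * 1 \<le> c * c ^ k" using \<open>c \<le> c^k\<close> Suc.prems(1) by (meson mult_left_mono' order_trans)
    then show ?thesis by simp
  qed
qed simp

lemma pow_strict: assumes "y < x" "0 < k" shows "y ^ k < x ^ k"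
proof (cases "y = 0")
  case True
  then have "x \<noteq> 0" using assms by auto
  then show ?thesis using True pow_nz[of x k] assms(2) by (simp add: order.strict_iff_order power_0_left)
next
  case False
  define c where "c = inverse y * x"
  have xc: "x = y * c" using False by (simp add: c_def mult.assoc[symmetric] right_inverse_nz)
  have c1: "1 \<le> c" using mult_left_mono'[of y x "inverse y"] assms(1) False
    by (simp add: c_def inv_left)
  have cne: "c \<noteq> 1" using xc assms(1) by auto
  have "c \<le> c ^ k" using one_le_pow[OF c1 assms(2)] .
  then have ck: "1 < c ^ k" using c1 cne by auto
  have "y ^ k * 1 \<le> y ^ k * c ^ k" using mult_left_mono'[OF less_imp_le[OF ck], of "y^k"] .
  moreover have "y ^ k * 1 \<noteq> y ^ k * c ^ k"
  proof
    assume "y ^ k * 1 = y ^ k * c ^ k"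
    then have "inverse (y^k) * (y ^ k * 1) = inverse (y^k) * (y ^ k * c ^ k)" by simp
    then have "1 = c ^ k" using pow_nz[OF False] by (simp add: mult.assoc[symmetric] inv_left)
    then show False using ck by simp
  qed
  ultimately show ?thesis by (simp add: xc power_mult_distrib)
qed

lemma pow_le_iff: "0 < k \<Longrightarrow> x ^ k \<le> y ^ k \<longleftrightarrow> x \<le> y"
proof
  assume k: "0 < k" and "x ^ k \<le> y ^ k"
  show "x \<le> y"
  proof (rule ccontr)
    assume "\<not> x \<le> y"
    then have "y < x" by simp
    then have "y ^ k < x ^ k" using pow_strict k by blast
    then show False using \<open>x ^ k \<le> y ^ k\<close> by simp
  qed
qed (rule pow_mono')

end

lemma iroot_pow: fixes a :: "'a::lin_rad_idem_semifield" assumes "0 < k" shows "iroot k a ^ k = a"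
proof -
  obtain y where y: "y ^ k = a" using radicable[OF assms, of a] by blast
  have "\<And>z. z ^ k = a \<Longrightarrow> z = y"
  proof -
    fix z assume "z ^ k = a"
    then show "z = y" using pow_le_iff[OF assms, of z y] pow_le_iff[OF assms, of y z] y
      by (simp add: order.antisym)
  qed
  then have "(THE y. y ^ k = a) = y" using y by (rule the_equality[rotated])
  then show ?thesis using y by (simp add: iroot_def)
qed

lemma iroot_le_iff: fixes a :: "'a::lin_rad_idem_semifield" shows "0 < k \<Longrightarrow> iroot k a \<le> m \<longleftrightarrow> a \<le> m ^ k"
  using iroot_pow[of k a] pow_le_iff[of k "iroot k a" m] by simp

lemma iroot_zero: shows "0 < k \<Longrightarrow> iroot k (0::'a::lin_rad_idem_semifield) = 0"
proof -
  assume k: "0 < k"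
  have "iroot k (0::'a) \<le> 0" using iroot_le_iff[of k 0 0] k by (simp add: zero_power)
  then show ?thesis using zero_least[of "iroot k (0::'a)"] by (rule order.antisym)
qed

type_synonym ('a,'n) sqm = "'a ^ 'n ^ 'n"

lemma mat_le_iff: "(X::'a::ord^'n::finite^'m::finite) \<le> Y \<longleftrightarrow> (\<forall>i j. X$i$j \<le> Y$i$j)"
  by (simp add: less_eq_vec_def)

lemma mat_add_le_iff: "(X + Y \<le> (Z::'a::lin_rad_idem_semifield^'n::finite^'m::finite)) \<longleftrightarrow> X \<le> Z \<and> Y \<le> Z"
  by (auto simp: less_eq_vec_def)

lemma mat_sum_le_iff: "finite S \<Longrightarrow> (sum f S \<le> (Z::'a::lin_rad_idem_semifield^'n::finite^'m::finite)) \<longleftrightarrow> (\<forall>s\<in>S. f s \<le> Z)"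
  by (auto simp: less_eq_vec_def sum_le_iff)

lemma mat_mem_le_sum: "finite S \<Longrightarrow> s \<in> S \<Longrightarrow> f s \<le> (sum f S :: 'a::lin_rad_idem_semifield^'n::finite^'m::finite)"
  by (auto simp: less_eq_vec_def intro: mem_le_sum)

lemma vec_sum_le_iff: "finite S \<Longrightarrow> (sum f S \<le> (Z::'a::lin_rad_idem_semifield^'n::finite)) \<longleftrightarrow> (\<forall>s\<in>S. f s \<le> Z)"
  by (auto simp: less_eq_vec_def sum_le_iff)

lemma mm_mono: "(X::'a::lin_rad_idem_semifield^'n::finite^'m::finite) \<le> X' \<Longrightarrow> (Y::'a^'p::finite^'n) \<le> Y' \<Longrightarrow> X ** Y \<le> X' ** Y'"
  unfolding matrix_matrix_mult_def less_eq_vec_def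
  by (auto intro!: sum_mono' mult_mono'')

lemma mv_mono: "(X::'a::lin_rad_idem_semifield^'n::finite^'m::finite) \<le> X' \<Longrightarrow> x \<le> x' \<Longrightarrow> X *v x \<le> X' *v x'"
  unfolding matrix_vector_mult_def less_eq_vec_def
  by (auto intro!: sum_mono' mult_mono'')

lemma mpow_mono: "X \<le> Y \<Longrightarrow> mpow X k \<le> mpow Y k"
  by (induction k) (auto intro: mm_mono)

lemma mpow_add: "mpow X (a + b) = mpow X a ** mpow X b"
  by (induction a) (auto simp: matrix_mul_assoc)

lemma mprod_append: "mprod (xs @ ys) = mprod xs ** mprod ys"
  by (induction xs) (auto simp: matrix_mul_assoc)

lemma mm_sum_right: "finite S \<Longrightarrow> (X::'a::lin_rad_idem_semifield^'n::finite^'m::finite) ** sum f S = sum (\<lambda>s. X ** f s) S"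
  by (induction S rule: finite_induct) (auto simp: matrix_add_ldistrib)

lemma matrix_add_rdistrib': "((B + C) ** (A::'a::lin_rad_idem_semifield^'p::finite^'n::finite)) = (B ** A) + (C ** A)"
  by (vector matrix_matrix_mult_def sum.distrib[symmetric] distrib_right)

lemma sum_mv: "finite S \<Longrightarrow> sum f S *v (x::'a::lin_rad_idem_semifield^'n::finite) = sum (\<lambda>s. f s *v x) S"
  by (induction S rule: finite_induct) (auto simp: matrix_vector_mult_def vec_eq_iff sum.distrib distrib_right)

definition lin :: "('n \<Rightarrow> 'n \<Rightarrow> 'a) \<Rightarrow> 'a::lin_rad_idem_semifield ^ 'n::finite ^ 'n \<Rightarrow> 'a" where
  "lin w X = (\<Sum>i\<in>UNIV. \<Sum>j\<in>UNIV. w i j * X$i$j)"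

lemma lin_add: "lin w (X + Y) = lin w X + lin w Y"
  by (simp add: lin_def distrib_left sum.distrib)

lemma lin_zero: "lin w 0 = 0"
  by (simp add: lin_def)

lemma lin_sum: "finite S \<Longrightarrow> lin w (sum f S) = sum (\<lambda>s. lin w (f s)) S"
  by (induction S rule: finite_induct) (auto simp: lin_add lin_zero)

lemma lin_mono: "X \<le> Y \<Longrightarrow> lin w X \<le> lin w Y"
  unfolding lin_def less_eq_vec_def
  by (auto intro!: sum_mono' mult_left_mono')

lemma lin_le_iff: "lin w X \<le> z \<longleftrightarrow> (\<forall>i j. w i j * X$i$j \<le> z)"
  by (simp add: lin_def sum_le_iff)

lemma smat_lin: "lin w (smat c X) = c * lin w X"
  by (simp add: lin_def smat_def sum_distrib_left mult_ac)

lemma tr_lin: "tr X = lin (\<lambda>i j. if i = j then 1 else 0) X"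
proof -
  have "\<And>i. (\<Sum>j\<in>UNIV. (if i = j then 1 else 0) * X$i$j) = X$i$i"
  proof -
    fix i
    have "(\<Sum>j\<in>UNIV. (if i = j then 1 else 0) * X$i$j) = (\<Sum>j\<in>UNIV. if i = j then X$i$j else 0)"
      by (rule sum.cong) auto
    then show "(\<Sum>j\<in>UNIV. (if i = j then 1 else 0) * X$i$j) = X$i$i" by simp
  qed
  then show ?thesis by (simp add: lin_def tr_def)
qed

lemma g_lin: "vdot (vinv q) (X *v p) = lin (\<lambda>i j. inverse (q$i) * p$j) X"
  by (simp add: lin_def vdot_def vinv_def matrix_vector_mult_def sum_distrib_left mult_ac)

lemma smat_mm_left: "smat c X ** Y = smat c (X ** Y)"
  by (simp add: smat_def matrix_matrix_mult_def vec_eq_iff sum_distrib_left mult_ac)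

lemma smat_mm_right: "X ** smat c Y = smat c (X ** Y)"
  by (simp add: smat_def matrix_matrix_mult_def vec_eq_iff sum_distrib_left mult_ac)

lemma smat_smat: "smat c (smat d X) = smat (c * d) X"
  by (simp add: smat_def vec_eq_iff mult_ac)

lemma smat_one: "smat 1 X = X"
  by (simp add: smat_def vec_eq_iff)

lemma smat_mv: "smat c X *v x = c *s (X *v x)"
  by (simp add: smat_def matrix_vector_mult_def vector_scalar_mult_def vec_eq_iff sum_distrib_left mult_ac)

lemma tr_comm: "tr ((X::'a::lin_rad_idem_semifield^'n::finite^'n) ** Y) = tr (Y ** X)"
  unfolding tr_def matrix_matrix_mult_def
  by (simp add: mult.commute) (rule sum.swap)

lemma diag_le_tr: "X$i$i \<le> tr X"
  unfolding tr_def by (rule mem_le_sum) auto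

fun pw :: "'a::lin_rad_idem_semifield ^ 'n::finite ^ 'n \<Rightarrow> 'n list \<Rightarrow> 'a" where
  "pw M [] = 1"
| "pw M [v] = 1"
| "pw M (u # v # vs) = M$u$v * pw M (v # vs)"

lemma pw_Cons: "vs \<noteq> [] \<Longrightarrow> pw M (u # vs) = M$u$(hd vs) * pw M vs"
  by (cases vs) auto

lemma pw_append: "pw M (xs @ [y] @ ys) = pw M (xs @ [y]) * pw M (y # ys)"
proof (induction xs)
  case Nil then show ?case by simp
next
  case (Cons a xs)
  then show ?case by (cases xs) (auto simp: mult.assoc)
qed

lemma pw_le_mpow: "vs \<noteq> [] \<Longrightarrow> pw M vs \<le> (mpow M (length vs - 1)) $ hd vs $ last vs"
proof (induction vs)
  case Nil then show ?case by simp
next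
  case (Cons u vs)
  show ?case
  proof (cases "vs = []")
    case True then show ?thesis by (simp add: mat_def)
  next
    case False
    then have "pw M (u # vs) = M$u$(hd vs) * pw M vs" by (rule pw_Cons)
    also have "\<dots> \<le> M$u$(hd vs) * (mpow M (length vs - 1)) $ hd vs $ last vs"
      using Cons.IH[OF False] by (rule mult_left_mono')
    also have "\<dots> \<le> (\<Sum>k\<in>UNIV. M$u$k * (mpow M (length vs - 1)) $ k $ last vs)"
      by (rule mem_le_sum) auto
    also have "\<dots> = (mpow M (Suc (length vs - 1))) $ u $ last vs"
      by (simp add: matrix_matrix_mult_def)
    finally show ?thesis using False by simp
  qed
qed

lemma mpow_attained:
  "(mpow M m)$i$j = 0 \<or> (\<exists>vs. length vs = Suc m \<and> hd vs = i \<and> last vs = j \<and> (mpow M m)$i$j = pw M vs)"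
proof (induction m arbitrary: i)
  case 0
  show ?case
  proof (cases "i = j")
    case True then show ?thesis by (intro disjI2 exI[of _ "[i]"]) (simp add: mat_def)
  qed (simp add: mat_def)
next
  case (Suc m)
  have "(mpow M (Suc m))$i$j = (\<Sum>k\<in>UNIV. M$i$k * (mpow M m)$k$j)"
    by (simp add: matrix_matrix_mult_def)
  moreover obtain k where k: "(\<Sum>k\<in>UNIV. M$i$k * (mpow M m)$k$j) = M$i$k * (mpow M m)$k$j"
    using sum_attained[of UNIV "\<lambda>k. M$i$k * (mpow M m)$k$j"] by auto
  ultimately have e: "(mpow M (Suc m))$i$j = M$i$k * (mpow M m)$k$j" by simp
  from Suc.IH[of k] show ?case
  proof
    assume "(mpow M m)$k$j = 0" then show ?thesis using e by simp
  next
    assume "\<exists>vs. length vs = Suc m \<and> hd vs = k \<and> last vs = j \<and> (mpow M m)$k$j = pw M vs"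
    then obtain vs where vs: "length vs = Suc m" "hd vs = k" "last vs = j" "(mpow M m)$k$j = pw M vs" by blast
    then have ne: "vs \<noteq> []" by auto
    show ?thesis
      by (intro disjI2 exI[of _ "i # vs"]) (use vs ne e pw_Cons[OF ne, of M i] in auto)
  qed
qed

lemma card_le_n: "distinct (vs :: 'n::finite list) \<Longrightarrow> length vs \<le> CARD('n)"
  using distinct_card[of vs] card_mono[of UNIV "set vs"] by simp

lemma tr_le_Trc: "1 \<le> k \<Longrightarrow> k \<le> CARD('n) \<Longrightarrow> tr (mpow (M::'a::lin_rad_idem_semifield^'n::finite^'n) k) \<le> Trc M"
  unfolding Trc_def by (rule mem_le_sum) auto

lemma closed_le_1:
  fixes M :: "'a::lin_rad_idem_semifield^'n::finite^'n"
  assumes T: "Trc M \<le> 1"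
  shows "2 \<le> length vs \<Longrightarrow> hd vs = last vs \<Longrightarrow> pw M vs \<le> 1"
proof (induction "length vs" arbitrary: vs rule: less_induct)
  case less
  define ws where "ws = butlast vs"
  define v where "v = last vs"
  have "vs \<noteq> []" using less.prems by auto
  then have vsd: "vs = ws @ [v]" by (simp add: ws_def v_def)
  show ?case
  proof (cases "distinct ws")
    case True
    then have L: "length ws \<le> CARD('n)" by (rule card_le_n)
    have L1: "1 \<le> length ws" using less.prems vsd by simp
    have lw: "length vs - 1 = length ws" by (subst vsd) simp
    have "pw M vs \<le> (mpow M (length vs - 1)) $ hd vs $ last vs"
      using less.prems by (intro pw_le_mpow) auto
    also have "\<dots> = (mpow M (length ws)) $ v $ v" using less.prems(2) v_def lw by simp
    also have "\<dots> \<le> tr (mpow M (length ws))" by (rule diag_le_tr)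
    also have "\<dots> \<le> Trc M" using L L1 by (rule tr_le_Trc[rotated])
    finally show ?thesis using T by simp
  next
    case False
    then obtain xs ys zs y where ws: "ws = xs @ [y] @ ys @ [y] @ zs"
      using not_distinct_decomp by blast
    define c where "c = y # ys @ [y]"
    define vs' where "vs' = xs @ [y] @ zs @ [v]"
    have "pw M vs = pw M (xs @ [y]) * pw M (y # ys @ [y] @ zs @ [v])"
      using vsd ws pw_append[of M xs y "ys @ [y] @ zs @ [v]"] by simp
    also have "pw M (y # ys @ [y] @ zs @ [v]) = pw M c * pw M (y # zs @ [v])"
      using pw_append[of M "y # ys" y "zs @ [v]"] by (simp add: c_def)
    finally have e1: "pw M vs = pw M vs' * pw M c"
      using pw_append[of M xs y "zs @ [v]"] by (simp add: vs'_def mult_ac)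
    have lc: "length c < length vs" by (simp add: c_def vsd ws)
    have c1: "pw M c \<le> 1"
      by (rule less.hyps[OF lc]) (auto simp: c_def)
    have hv: "hd vs' = hd vs" by (cases xs) (auto simp: vs'_def vsd ws)
    have lvs: "last vs' = v" by (simp add: vs'_def)
    have len: "length vs' < length vs" by (simp add: vs'_def vsd ws)
    have l2: "2 \<le> length vs'" by (simp add: vs'_def)
    have hl: "hd vs' = last vs'" using hv less.prems(2) lvs v_def by simp
    have v1: "pw M vs' \<le> 1" by (rule less.hyps[OF len l2 hl])
    have "pw M vs' * pw M c \<le> 1 * 1" using v1 c1 by (rule mult_mono'')
    then show ?thesis using e1 by simp
  qed
qed

lemma mpow_le_kstar_lt: "k < CARD('n) \<Longrightarrow> mpow (M::'a::lin_rad_idem_semifield^'n::finite^'n) k \<le> kstar M"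
  unfolding kstar_def by (rule mat_mem_le_sum) auto

lemma path_le_kstar:
  fixes M :: "'a::lin_rad_idem_semifield^'n::finite^'n"
  assumes T: "Trc M \<le> 1"
  shows "vs \<noteq> [] \<Longrightarrow> pw M vs \<le> (kstar M) $ hd vs $ last vs"
proof (induction "length vs" arbitrary: vs rule: less_induct)
  case less
  show ?case
  proof (cases "distinct vs")
    case True
    then have L: "length vs \<le> CARD('n)" by (rule card_le_n)
    have lt: "length vs - 1 < CARD('n)" using L less.prems by (cases "length vs") auto
    have "pw M vs \<le> (mpow M (length vs - 1)) $ hd vs $ last vs"
      using less.prems by (rule pw_le_mpow)
    also have "\<dots> \<le> (kstar M) $ hd vs $ last vs"
      using mpow_le_kstar_lt[OF lt, of M] by (simp add: mat_le_iff)
    finally show ?thesis .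
  next
    case False
    then obtain xs ys zs y where vs: "vs = xs @ [y] @ ys @ [y] @ zs"
      using not_distinct_decomp by blast
    define c where "c = y # ys @ [y]"
    define vs' where "vs' = xs @ [y] @ zs"
    have "pw M vs = pw M (xs @ [y]) * pw M (y # ys @ [y] @ zs)"
      using vs pw_append[of M xs y "ys @ [y] @ zs"] by simp
    also have "pw M (y # ys @ [y] @ zs) = pw M c * pw M (y # zs)"
      using pw_append[of M "y # ys" y "zs"] by (simp add: c_def)
    finally have e1: "pw M vs = pw M vs' * pw M c"
      using pw_append[of M xs y "zs"] by (simp add: vs'_def mult_ac)
    have c1: "pw M c \<le> 1"
      by (rule closed_le_1[OF T]) (auto simp: c_def)
    have hv: "hd vs' = hd vs" by (cases xs) (auto simp: vs'_def vs)
    have lv: "last vs' = last vs" by (cases zs) (auto simp: vs'_def vs)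
    have v1: "pw M vs' \<le> (kstar M) $ hd vs' $ last vs'"
      by (rule less.hyps) (auto simp: vs'_def vs)
    have "pw M vs' * pw M c \<le> (kstar M) $ hd vs' $ last vs' * 1" using v1 c1 by (rule mult_mono'')
    then show ?thesis using e1 hv lv by simp
  qed
qed

lemma mpow_le_kstar:
  fixes M :: "'a::lin_rad_idem_semifield^'n::finite^'n"
  assumes T: "Trc M \<le> 1"
  shows "mpow M m \<le> kstar M"
  unfolding mat_le_iff
proof (intro allI)
  fix i j
  from mpow_attained[of M m i j] show "(mpow M m)$i$j \<le> (kstar M)$i$j"
  proof
    assume "\<exists>vs. length vs = Suc m \<and> hd vs = i \<and> last vs = j \<and> (mpow M m)$i$j = pw M vs"
    then obtain vs where vs: "length vs = Suc m" "hd vs = i" "last vs = j" "(mpow M m)$i$j = pw M vs" by blast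
    then have ne: "vs \<noteq> []" by auto
    show ?thesis using path_le_kstar[OF T ne] vs by auto
  qed simp
qed

lemma kstar_mul:
  fixes M :: "'a::lin_rad_idem_semifield^'n::finite^'n"
  assumes T: "Trc M \<le> 1"
  shows "M ** kstar M \<le> kstar M"
proof -
  have "M ** kstar M = (\<Sum>k\<in>{0..<CARD('n)}. M ** mpow M k)"
    unfolding kstar_def by (rule mm_sum_right) simp
  also have "\<dots> \<le> kstar M"
    by (subst mat_sum_le_iff) (use mpow_le_kstar[OF T, of "Suc _"] in auto)
  finally show ?thesis .
qed

lemma one_le_kstar: "mat 1 \<le> kstar (M::'a::lin_rad_idem_semifield^'n::finite^'n)"
  using mpow_le_kstar_lt[of 0 M] by simp

lemma kstar_mono: "(X::'a::lin_rad_idem_semifield^'n::finite^'n) \<le> Y \<Longrightarrow> kstar X \<le> kstar Y"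
  unfolding kstar_def[of X]
  by (subst mat_sum_le_iff) (auto intro: order_trans[OF mpow_mono mpow_le_kstar_lt])

lemma mpow_mv_le: "M *v x \<le> x \<Longrightarrow> mpow M k *v x \<le> x"
proof (induction k)
  case (Suc k)
  have "mpow M (Suc k) *v x = M *v (mpow M k *v x)" by (simp add: matrix_vector_mul_assoc)
  also have "\<dots> \<le> M *v x" using Suc by (intro mv_mono) auto
  finally show ?case using Suc.prems by simp
qed simp

lemma kstar_mv_le:
  fixes M :: "'a::lin_rad_idem_semifield^'n::finite^'n"
  assumes "M *v x \<le> x" "b \<le> x"
  shows "kstar M *v b \<le> x"
proof -
  have "kstar M *v b = (\<Sum>k\<in>{0..<CARD('n)}. mpow M k *v b)"
    unfolding kstar_def by (rule sum_mv) simp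
  also have "\<dots> \<le> x"
    by (subst vec_sum_le_iff) (auto intro: order_trans[OF mv_mono[OF order_refl assms(2)] mpow_mv_le[OF assms(1)]])
  finally show ?thesis .
qed

lemma trc_of_sol:
  fixes M :: "'a::lin_rad_idem_semifield^'n::finite^'n"
  assumes reg: "regular x" and Mx: "M *v x \<le> x"
  shows "Trc M \<le> 1"
proof -
  have "\<forall>k. tr (mpow M k) \<le> 1"
  proof
  fix k
  have h: "mpow M k *v x \<le> x" using Mx by (rule mpow_mv_le)
  have "\<forall>i. (mpow M k)$i$i \<le> 1"
  proof
    fix i
    have "(mpow M k)$i$i * x$i \<le> (mpow M k *v x)$i"
      unfolding matrix_vector_mult_def by simp (rule mem_le_sum, auto)
    also have "\<dots> \<le> x$i" using h by (simp add: less_eq_vec_def)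
    finally have "(mpow M k)$i$i * x$i \<le> 1 * x$i" by simp
    then show "(mpow M k)$i$i \<le> 1" using mult_cancel_le[of "x$i" "(mpow M k)$i$i" 1] reg by (simp add: regular_def)
  qed
  then show "tr (mpow M k) \<le> 1" unfolding tr_def by (simp add: sum_le_iff)
  qed
  then show ?thesis unfolding Trc_def by (simp add: sum_le_iff)
qed

definition word :: "'a::lin_rad_idem_semifield^'n::finite^'n \<Rightarrow> 'a^'n^'n \<Rightarrow> nat \<times> nat list \<Rightarrow> 'a^'n^'n" where
  "word A B w = mpow B (fst w) ** mprod (map (\<lambda>i. A ** mpow B i) (snd w))"

definition Wset :: "nat \<Rightarrow> (nat \<times> nat list) set" where
  "Wset m = {w. fst w + sum_list (snd w) + length (snd w) = m}"

lemma finite_lists_bound: "finite {xs::nat list. set xs \<subseteq> {..N} \<and> length xs \<le> k}"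
  by (rule finite_lists_length_le) simp

lemma finite_Wset: "finite (Wset m)"
proof (rule finite_subset)
  show "Wset m \<subseteq> {..m} \<times> {xs. set xs \<subseteq> {..m} \<and> length xs \<le> m}"
  proof
    fix w assume "w \<in> Wset m"
    then have h: "fst w + sum_list (snd w) + length (snd w) = m" by (simp add: Wset_def)
    have "\<forall>x\<in>set (snd w). x \<le> m" using h member_le_sum_list[of _ "snd w"] by fastforce
    then show "w \<in> {..m} \<times> {xs. set xs \<subseteq> {..m} \<and> length xs \<le> m}"
      using h by (cases w) auto
  qed
  show "finite ({..m} \<times> {xs::nat list. set xs \<subseteq> {..m} \<and> length xs \<le> m})"
    using finite_lists_bound by blast
qed

lemma mpow_le_words:
  fixes A B :: "'a::lin_rad_idem_semifield^'n::finite^'n"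
  shows "mpow (A + B) m \<le> sum (word A B) (Wset m)"
proof (induction m)
  case 0
  have "word A B (0, []) = mat 1" by (simp add: word_def)
  moreover have "(0, []) \<in> Wset 0" by (simp add: Wset_def)
  ultimately show ?case using mat_mem_le_sum[OF finite_Wset, of "(0,[])" 0 "word A B"] by simp
next
  case (Suc m)
  have "mpow (A + B) (Suc m) = (A + B) ** mpow (A + B) m" by simp
  also have "\<dots> \<le> (A + B) ** sum (word A B) (Wset m)"
    using Suc by (intro mm_mono) auto
  also have "\<dots> = sum (\<lambda>w. (A + B) ** word A B w) (Wset m)"
    by (rule mm_sum_right[OF finite_Wset])
  also have "\<dots> \<le> sum (word A B) (Wset (Suc m))"
  proof (subst mat_sum_le_iff[OF finite_Wset], intro ballI)
    fix w assume w: "w \<in> Wset m"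
    obtain i0 js where wd: "w = (i0, js)" by fastforce
    have e1: "A ** word A B w = word A B (0, i0 # js)"
      by (simp add: wd word_def matrix_mul_assoc)
    have e2: "B ** word A B w = word A B (Suc i0, js)"
      by (simp add: wd word_def matrix_mul_assoc)
    have m1: "(0, i0 # js) \<in> Wset (Suc m)" "(Suc i0, js) \<in> Wset (Suc m)"
      using w by (auto simp: wd Wset_def)
    show "(A + B) ** word A B w \<le> sum (word A B) (Wset (Suc m))"
      unfolding matrix_add_rdistrib' mat_add_le_iff e1 e2
      using m1 by (auto intro: mat_mem_le_sum[OF finite_Wset])
  qed
  finally show ?case .
qed

lemma mprod_le_mpow:
  fixes X Y M :: "'a::lin_rad_idem_semifield^'n::finite^'n"
  assumes "X \<le> M" "Y \<le> M"
  shows "mprod (map (\<lambda>i. X ** mpow Y i) xs) \<le> mpow M (sum_list xs + length xs)"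
proof (induction xs)
  case Nil then show ?case by simp
next
  case (Cons i xs)
  have "mprod (map (\<lambda>i. X ** mpow Y i) (i # xs)) = (X ** mpow Y i) ** mprod (map (\<lambda>i. X ** mpow Y i) xs)"
    by simp
  also have "\<dots> \<le> (M ** mpow M i) ** mpow M (sum_list xs + length xs)"
    using assms Cons by (intro mm_mono mpow_mono) auto
  also have "\<dots> = mpow M (sum_list (i # xs) + length (i # xs))"
  proof -
    have "sum_list (i # xs) + length (i # xs) = Suc (i + (sum_list xs + length xs))" by simp
    then show ?thesis by (simp only: mpow.simps mpow_add matrix_mul_assoc)
  qed
  finally show ?case .
qed

lemma word_le_mpow:
  fixes X Y M :: "'a::lin_rad_idem_semifield^'n::finite^'n"
  assumes "X \<le> M" "Y \<le> M"
  shows "word X Y w \<le> mpow M (fst w + sum_list (snd w) + length (snd w))"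
proof -
  have "word X Y w \<le> mpow M (fst w) ** mpow M (sum_list (snd w) + length (snd w))"
    unfolding word_def using assms by (intro mm_mono mpow_mono mprod_le_mpow) auto
  also have "\<dots> = mpow M (fst w + sum_list (snd w) + length (snd w))"
    by (simp add: mpow_add add.assoc)
  finally show ?thesis .
qed

lemma mprod_smat:
  fixes A B :: "'a::lin_rad_idem_semifield^'n::finite^'n"
  shows "mprod (map (\<lambda>i. smat c A ** mpow B i) xs) = smat (c ^ length xs) (mprod (map (\<lambda>i. A ** mpow B i) xs))"
  by (induction xs) (simp_all add: smat_one smat_mm_left smat_mm_right smat_smat mult.commute)

lemma word_smat:
  "word (smat c A) B w = smat (c ^ length (snd w)) (word A B w)"
  by (simp add: word_def mprod_smat smat_mm_right)

lemma lin_word_smat: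
  "lin v (word (smat c A) B w) = c ^ length (snd w) * lin v (word A B w)"
  by (simp add: word_smat smat_lin)

lemma word_rot:
  fixes A B :: "'a::lin_rad_idem_semifield^'n::finite^'n"
  shows "tr (word A B (i0, js @ [l])) = tr (mprod (map (\<lambda>i. A ** mpow B i) (js @ [l + i0])))"
proof -
  have "tr (word A B (i0, js @ [l])) = tr (mprod (map (\<lambda>i. A ** mpow B i) (js @ [l])) ** mpow B i0)"
    unfolding word_def by (simp add: tr_comm)
  also have "\<dots> = tr (mprod (map (\<lambda>i. A ** mpow B i) (js @ [l + i0])))"
    by (simp add: mprod_append mpow_add matrix_mul_assoc)
  finally show ?thesis .
qed

lemma mprod_rep0: "mprod (map (\<lambda>i. A ** mpow B i) (replicate k 0)) = mpow A k"
  by (induction k) auto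

lemma inv_unique: "(a::'a::lin_rad_idem_semifield) * b = 1 \<Longrightarrow> b = inverse a"
proof -
  assume h: "a * b = 1"
  then have "a \<noteq> 0" by auto
  then have "b = (inverse a * a) * b" by (simp add: inv_left)
  also have "\<dots> = inverse a" using h by (simp add: mult.assoc)
  finally show ?thesis .
qed

lemma inverse_pow: "(\<mu>::'a::lin_rad_idem_semifield) \<noteq> 0 \<Longrightarrow> inverse \<mu> ^ k = inverse (\<mu> ^ k)"
  by (rule inv_unique) (simp add: power_mult_distrib[symmetric] right_inverse_nz)

lemma scale_le: "(\<mu>::'a::lin_rad_idem_semifield) \<noteq> 0 \<Longrightarrow> inverse \<mu> ^ k * t \<le> z \<longleftrightarrow> t \<le> \<mu> ^ k * z"
  using inv_mult_le[of "\<mu>^k" t z] pow_nz[of \<mu> k] by (simp add: inverse_pow)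

lemma finite_Iset: "finite {xs::nat list. length xs = k \<and> sum_list xs \<le> N}"
proof (rule finite_subset[OF _ finite_lists_bound[of N k]])
  show "{xs::nat list. length xs = k \<and> sum_list xs \<le> N} \<subseteq> {xs. set xs \<subseteq> {..N} \<and> length xs \<le> k}"
    using member_le_sum_list[where 'a=nat] by (force intro: order_trans)
qed

lemma finite_Jset: "finite {(i0::nat, xs::nat list). length xs = k \<and> i0 + sum_list xs \<le> N}"
proof (rule finite_subset)
  show "{(i0::nat, xs::nat list). length xs = k \<and> i0 + sum_list xs \<le> N} \<subseteq> {..N} \<times> {xs. set xs \<subseteq> {..N} \<and> length xs \<le> k}"
    using member_le_sum_list[where 'a=nat] by (force intro: order_trans)
  show "finite ({..N} \<times> {xs::nat list. set xs \<subseteq> {..N} \<and> length xs \<le> k})"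
    using finite_lists_bound by blast
qed

lemma Tmat_word: "0 < k \<Longrightarrow> Tmat A B k = sum (word A B) {(i0, xs). length xs = k \<and> i0 + sum_list xs \<le> CARD('n) - k - 1}"
  for A B :: "'a::lin_rad_idem_semifield^'n::finite^'n"
  unfolding Tmat_def word_def by (simp add: case_prod_beta')

lemma tr_mono: "X \<le> Y \<Longrightarrow> tr X \<le> tr Y"
  unfolding tr_lin by (rule lin_mono)

lemma tr_sum: "finite S \<Longrightarrow> tr (sum f S) = sum (\<lambda>s. tr (f s)) S"
  unfolding tr_lin by (rule lin_sum)

lemma le_add_mat1: "(X::'a::lin_rad_idem_semifield^'n::finite^'m::finite) \<le> X + Y"
  by (simp add: less_eq_vec_def)
lemma le_add_mat2: "(Y::'a::lin_rad_idem_semifield^'n::finite^'m::finite) \<le> X + Y"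
  by (simp add: less_eq_vec_def)

lemma word_Nil: "word A B (i0, []) = mpow B i0"
  by (simp add: word_def)

lemma A1a:
  fixes A B :: "'a::lin_rad_idem_semifield^'n::finite^'n"
  assumes mu: "\<mu> \<noteq> 0" and T: "Trc (smat (inverse \<mu>) A + B) \<le> 1"
    and k: "1 \<le> k" "k \<le> CARD('n)"
  shows "tr (Smat A B k) \<le> \<mu> ^ k"
proof -
  define M where "M = smat (inverse \<mu>) A + B"
  have "\<forall>xs \<in> {xs. length xs = k \<and> sum_list xs \<le> CARD('n) - k}. tr (mprod (map (\<lambda>i. A ** mpow B i) xs)) \<le> \<mu> ^ k"
  proof
    fix xs assume "xs \<in> {xs. length xs = k \<and> sum_list xs \<le> CARD('n) - k}"
    then have xs: "length xs = k" "sum_list xs \<le> CARD('n) - k" by auto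
    have "inverse \<mu> ^ k * tr (mprod (map (\<lambda>i. A ** mpow B i) xs)) = tr (word (smat (inverse \<mu>) A) B (0, xs))"
      unfolding tr_lin lin_word_smat using xs by (simp add: word_def)
    also have "\<dots> \<le> tr (mpow M (0 + sum_list xs + length xs))"
      using word_le_mpow[of "smat (inverse \<mu>) A" M B "(0, xs)"]
      by (intro tr_mono) (simp add: M_def le_add_mat1 le_add_mat2)
    also have "\<dots> \<le> Trc M"
      using xs k by (intro tr_le_Trc) auto
    also have "\<dots> \<le> 1" using T by (simp add: M_def)
    finally show "tr (mprod (map (\<lambda>i. A ** mpow B i) xs)) \<le> \<mu> ^ k"
      using scale_le[OF mu] by simp
  qed
  then show ?thesis
    unfolding Smat_def by (simp add: tr_sum finite_Iset sum_le_iff)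
qed

lemma A1b:
  fixes A B :: "'a::lin_rad_idem_semifield^'n::finite^'n"
  assumes mu: "\<mu> \<noteq> 0" and TB: "Trc B \<le> 1"
    and S: "\<forall>k\<in>{1..CARD('n)}. tr (Smat A B k) \<le> \<mu> ^ k"
  shows "Trc (smat (inverse \<mu>) A + B) \<le> 1"
proof -
  define M where "M = smat (inverse \<mu>) A + B"
  have "\<forall>m\<in>{1..CARD('n)}. tr (mpow M m) \<le> 1"
  proof
    fix m assume m: "m \<in> {1..CARD('n)}"
    have "tr (mpow M m) \<le> tr (sum (word (smat (inverse \<mu>) A) B) (Wset m))"
      unfolding M_def by (rule tr_mono) (rule mpow_le_words)
    also have "\<dots> \<le> 1"
      unfolding tr_sum[OF finite_Wset] sum_le_iff[OF finite_Wset]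
    proof
      fix w assume w: "w \<in> Wset m"
      obtain i0 xs where wd: "w = (i0, xs)" by fastforce
      have wm: "i0 + sum_list xs + length xs = m" using w by (simp add: wd Wset_def)
      show "tr (word (smat (inverse \<mu>) A) B w) \<le> 1"
      proof (cases xs rule: rev_exhaust)
        case Nil
        have "tr (word (smat (inverse \<mu>) A) B w) = tr (mpow B m)" using wm by (simp add: wd Nil word_Nil)
        also have "\<dots> \<le> Trc B" using m by (intro tr_le_Trc) auto
        finally show ?thesis using TB by simp
      next
        case (snoc ys l)
        define k where "k = length xs"
        have k1: "1 \<le> k" "k \<le> CARD('n)" using snoc wm m by (auto simp: k_def)
        have "tr (word A B w) = tr (mprod (map (\<lambda>i. A ** mpow B i) (ys @ [l + i0])))"
          by (simp add: wd snoc word_rot)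
        also have "\<dots> \<le> tr (Smat A B k)"
          unfolding Smat_def
          by (rule tr_mono, rule mat_mem_le_sum[OF finite_Iset]) (use wm snoc m in \<open>auto simp: k_def\<close>)
        also have "\<dots> \<le> \<mu> ^ k" using S k1 by auto
        finally have "tr (word A B w) \<le> \<mu> ^ k * 1" by simp
        then have "inverse \<mu> ^ k * tr (word A B w) \<le> 1" using scale_le[OF mu] by blast
        then show ?thesis unfolding tr_lin lin_word_smat by (simp add: wd k_def)
      qed
    qed
    finally show "tr (mpow M m) \<le> 1" .
  qed
  then show ?thesis unfolding Trc_def M_def by (simp add: sum_le_iff)
qed

lemma A2a:
  fixes A B :: "'a::lin_rad_idem_semifield^'n::finite^'n"
  assumes mu: "\<mu> \<noteq> 0" and G: "lin v (kstar (smat (inverse \<mu>) A + B)) \<le> \<mu> * \<mu>"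
    and k: "k < CARD('n)"
  shows "lin v (Tmat A B k) \<le> \<mu> ^ (k + 2)"
proof -
  define M where "M = smat (inverse \<mu>) A + B"
  show ?thesis
  proof (cases "k = 0")
    case True
    have "lin v (Tmat A B k) \<le> lin v (kstar M)"
      using True by (simp add: Tmat_def M_def lin_mono kstar_mono le_add_mat2)
    also have "\<dots> \<le> \<mu> * \<mu>" using G by (simp add: M_def)
    finally show ?thesis using True by (simp add: power2_eq_square)
  next
    case False
    have "\<forall>w\<in>{(i0, xs). length xs = k \<and> i0 + sum_list xs \<le> CARD('n) - k - 1}. lin v (word A B w) \<le> \<mu> ^ (k + 2)"
    proof
      fix w assume "w \<in> {(i0, xs). length xs = k \<and> i0 + sum_list xs \<le> CARD('n) - k - 1}"
      then obtain i0 xs where wd: "w = (i0, xs)" and xs: "length xs = k" "i0 + sum_list xs \<le> CARD('n) - k - 1" by auto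
      have "inverse \<mu> ^ k * lin v (word A B w) = lin v (word (smat (inverse \<mu>) A) B w)"
        by (simp add: lin_word_smat wd xs)
      also have "\<dots> \<le> lin v (mpow M (i0 + sum_list xs + length xs))"
        using word_le_mpow[of "smat (inverse \<mu>) A" M B w]
        by (intro lin_mono) (simp add: M_def le_add_mat1 le_add_mat2 wd)
      also have "\<dots> \<le> lin v (kstar M)"
        using xs k False by (intro lin_mono mpow_le_kstar_lt) auto
      also have "\<dots> \<le> \<mu> * \<mu>" using G by (simp add: M_def)
      finally have "lin v (word A B w) \<le> \<mu> ^ k * (\<mu> * \<mu>)" using scale_le[OF mu] by blast
      then show "lin v (word A B w) \<le> \<mu> ^ (k + 2)" by (simp add: power_add power2_eq_square mult_ac)
    qed
    then show ?thesis using False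
      by (simp add: Tmat_word lin_sum finite_Jset sum_le_iff)
  qed
qed

lemma A2b:
  fixes A B :: "'a::lin_rad_idem_semifield^'n::finite^'n"
  assumes mu: "\<mu> \<noteq> 0" and Tk: "\<forall>k<CARD('n). lin v (Tmat A B k) \<le> \<mu> ^ (k + 2)"
  shows "lin v (kstar (smat (inverse \<mu>) A + B)) \<le> \<mu> * \<mu>"
proof -
  define M where "M = smat (inverse \<mu>) A + B"
  have "\<forall>m\<in>{0..<CARD('n)}. lin v (mpow M m) \<le> \<mu> * \<mu>"
  proof
    fix m assume m: "m \<in> {0..<CARD('n)}"
    have "lin v (mpow M m) \<le> lin v (sum (word (smat (inverse \<mu>) A) B) (Wset m))"
      unfolding M_def by (rule lin_mono) (rule mpow_le_words)
    also have "\<dots> \<le> \<mu> * \<mu>"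
      unfolding lin_sum[OF finite_Wset] sum_le_iff[OF finite_Wset]
    proof
      fix w assume w: "w \<in> Wset m"
      obtain i0 xs where wd: "w = (i0, xs)" by fastforce
      have wm: "i0 + sum_list xs + length xs = m" using w by (simp add: wd Wset_def)
      define k where "k = length xs"
      have kn: "k < CARD('n)" using wm m by (auto simp: k_def)
      have "lin v (word A B w) \<le> lin v (Tmat A B k)"
      proof (cases "k = 0")
        case True
        then have "xs = []" by (simp add: k_def)
        then have "word A B w = mpow B m" using wm by (simp add: wd word_Nil)
        then show ?thesis using True m by (simp add: Tmat_def lin_mono mpow_le_kstar_lt)
      next
        case False
        have kpos: "0 < k" using False by simp
        show ?thesis unfolding Tmat_word[OF kpos]
          by (rule lin_mono, rule mat_mem_le_sum[OF finite_Jset]) (use wm m False in \<open>auto simp: wd k_def\<close>)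
      qed
      also have "\<dots> \<le> \<mu> ^ (k + 2)" using Tk kn by blast
      finally have "lin v (word A B w) \<le> \<mu> ^ k * (\<mu> * \<mu>)" by (simp add: power_add power2_eq_square mult_ac)
      then have "inverse \<mu> ^ k * lin v (word A B w) \<le> \<mu> * \<mu>" using scale_le[OF mu] by blast
      then show "lin v (word (smat (inverse \<mu>) A) B w) \<le> \<mu> * \<mu>"
        by (simp add: lin_word_smat wd k_def)
    qed
    finally show "lin v (mpow M m) \<le> \<mu> * \<mu>" .
  qed
  then show ?thesis unfolding kstar_def M_def by (simp add: lin_sum sum_le_iff)
qed

lemma theta_le_iff:
  fixes A B :: "'a::lin_rad_idem_semifield^'n::finite^'n" and p q :: "'a^'n"
  assumes mu: "\<mu> \<noteq> 0" and TrB: "Trc B \<le> 1"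
  shows "(\<Sum>k\<in>{1..CARD('n)}. iroot k (tr (Smat A B k)))
          + (\<Sum>k\<in>{0..<CARD('n)}. iroot (k + 2) (vdot (vinv q) (Tmat A B k *v p))) + r \<le> \<mu>
    \<longleftrightarrow> Trc (smat (inverse \<mu>) A + B) \<le> 1
       \<and> vdot (vinv q) (kstar (smat (inverse \<mu>) A + B) *v p) \<le> \<mu> * \<mu> \<and> r \<le> \<mu>"
proof -
  have e1: "(\<Sum>k\<in>{1..CARD('n)}. iroot k (tr (Smat A B k))) \<le> \<mu> \<longleftrightarrow> (\<forall>k\<in>{1..CARD('n)}. tr (Smat A B k) \<le> \<mu> ^ k)"
    by (auto simp: sum_le_iff iroot_le_iff)
  have e2: "(\<Sum>k\<in>{0..<CARD('n)}. iroot (k + 2) (vdot (vinv q) (Tmat A B k *v p))) \<le> \<mu>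
      \<longleftrightarrow> (\<forall>k<CARD('n). lin (\<lambda>i j. inverse (q$i) * p$j) (Tmat A B k) \<le> \<mu> ^ (k + 2))"
    by (auto simp: sum_le_iff iroot_le_iff g_lin)
  have e3: "Trc (smat (inverse \<mu>) A + B) \<le> 1 \<longleftrightarrow> (\<forall>k\<in>{1..CARD('n)}. tr (Smat A B k) \<le> \<mu> ^ k)"
    using A1a[OF mu] A1b[OF mu TrB] by auto
  have e4: "vdot (vinv q) (kstar (smat (inverse \<mu>) A + B) *v p) \<le> \<mu> * \<mu>
      \<longleftrightarrow> (\<forall>k<CARD('n). lin (\<lambda>i j. inverse (q$i) * p$j) (Tmat A B k) \<le> \<mu> ^ (k + 2))"
    unfolding g_lin using A2a[OF mu] A2b[OF mu] by blast
  show ?thesis using e1 e2 e3 e4 by simp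
qed

lemma vdot_le_iff: "vdot u y \<le> z \<longleftrightarrow> (\<forall>i. u$i * y$i \<le> z)"
  by (simp add: vdot_def sum_le_iff)

lemma vdot_mem: "u$i * y$i \<le> vdot u y"
  unfolding vdot_def by (rule mem_le_sum) auto

lemma vdot_mono2: "y \<le> y' \<Longrightarrow> vdot u y \<le> vdot u y'"
  unfolding vdot_def less_eq_vec_def by (auto intro!: sum_mono' mult_left_mono')

lemma vdot_smul: "vdot u (c *s y) = c * vdot u y"
  by (simp add: vdot_def vector_scalar_mult_def sum_distrib_left mult_ac)

lemma mv_smul: "C *v (c *s y) = c *s (C *v (y::'a::lin_rad_idem_semifield^'n::finite))"
  by (simp add: matrix_vector_mult_def vector_scalar_mult_def vec_eq_iff sum_distrib_left mult_ac)

lemma mat_add_mv: "(X + Y) *v x = X *v x + Y *v (x::'a::lin_rad_idem_semifield^'n::finite)"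
  by (simp add: matrix_vector_mult_def vec_eq_iff distrib_right sum.distrib)

lemma vec_add_le_iff: "(x + y \<le> (z::'a::lin_rad_idem_semifield^'n::finite)) \<longleftrightarrow> x \<le> z \<and> y \<le> z"
  by (auto simp: less_eq_vec_def)

lemma vdot_mv: "vdot v (C *v u) = vdot (v v* C) (u::'a::lin_rad_idem_semifield^'n::finite)"
  unfolding vdot_def matrix_vector_mult_def vector_matrix_mult_def
  by (simp add: sum_distrib_left sum_distrib_right mult.assoc) (rule sum.swap)

lemma mv_ge: "mat 1 \<le> C \<Longrightarrow> u \<le> C *v (u::'a::lin_rad_idem_semifield^'n::finite)"
  using mv_mono[of "mat 1" C u u] by simp

lemma diag_ge: "mat 1 \<le> (C::'a::lin_rad_idem_semifield^'n::finite^'n) \<Longrightarrow> 1 \<le> C$j$j"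
proof -
  assume "mat 1 \<le> C"
  then have "(mat 1 :: 'a^'n^'n)$j$j \<le> C$j$j" by (simp add: less_eq_vec_def)
  then show ?thesis by (simp add: mat_def)
qed

lemma vdot_inv_le: "regular x \<Longrightarrow> \<mu> \<noteq> 0 \<Longrightarrow> vdot (vinv x) y \<le> \<mu> \<longleftrightarrow> inverse \<mu> *s y \<le> x"
proof -
  assume x: "regular x" and mu: "\<mu> \<noteq> 0"
  have "\<And>i. inverse (x$i) * y$i \<le> \<mu> \<longleftrightarrow> inverse \<mu> * y$i \<le> x$i"
  proof -
    fix i
    have xi: "x$i \<noteq> 0" using x by (simp add: regular_def)
    show "inverse (x$i) * y$i \<le> \<mu> \<longleftrightarrow> inverse \<mu> * y$i \<le> x$i"
      using inv_mult_le[OF xi, of "y$i" \<mu>] inv_mult_le[OF mu, of "y$i" "x$i"] by (simp add: mult.commute)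
  qed
  then show ?thesis by (simp add: vdot_le_iff vinv_def less_eq_vec_def vector_scalar_mult_def)
qed

lemma mpow_zero: "0 < k \<Longrightarrow> mpow (0::'a::lin_rad_idem_semifield^'n::finite^'n) k = 0"
  by (cases k) auto

theorem corollary2:
  fixes A B :: "'a::lin_rad_idem_semifield ^ 'n::finite ^ 'n"
    and p q :: "'a ^ 'n"
    and r lam :: 'a
  assumes lam: "lam = (\<Sum>k\<in>{1..CARD('n)}. iroot k (tr (mpow A k)))"
    and TrB: "Trc B \<le> 1"
    and qreg: "regular q"
    and pos: "0 < lam + iroot 2 (vdot (vinv q) p) + r"
  shows "let F = (\<lambda>x. vdot (vinv x) (A *v x) + vdot (vinv x) p + vdot (vinv q) x + r);
             \<theta> = (\<Sum>k\<in>{1..CARD('n)}. iroot k (tr (Smat A B k)))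
                 + (\<Sum>k\<in>{0..<CARD('n)}. iroot (k + 2) (vdot (vinv q) (Tmat A B k *v p)))
                 + r;
             C = kstar (smat (inverse \<theta>) A + B)
         in (\<exists>x. regular x \<and> B *v x \<le> x \<and> F x = \<theta>)
          \<and> (\<forall>x. regular x \<and> B *v x \<le> x \<longrightarrow> \<theta> \<le> F x)
          \<and> (\<forall>x. regular x \<longrightarrow>
               ((B *v x \<le> x \<and> F x = \<theta>) \<longleftrightarrow>
                (\<exists>u. inverse \<theta> *s p \<le> u \<and> u \<le> \<theta> *s vinv (vinv q v* C) \<and> x = C *v u)))"
proof -
  define F where "F = (\<lambda>x. vdot (vinv x) (A *v x) + vdot (vinv x) p + vdot (vinv q) x + r)"
  define \<theta> where "\<theta> = (\<Sum>k\<in>{1..CARD('n)}. iroot k (tr (Smat A B k)))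
                 + (\<Sum>k\<in>{0..<CARD('n)}. iroot (k + 2) (vdot (vinv q) (Tmat A B k *v p)))
                 + r"
  define C where "C = kstar (smat (inverse \<theta>) A + B)"
  have feas: "\<And>x \<mu>. regular x \<Longrightarrow> \<mu> \<noteq> 0 \<Longrightarrow> (F x \<le> \<mu> \<and> B *v x \<le> x) \<longleftrightarrow>
      ((smat (inverse \<mu>) A + B) *v x \<le> x \<and> inverse \<mu> *s p \<le> x \<and> vdot (vinv q) x \<le> \<mu> \<and> r \<le> \<mu>)"
    by (auto simp: F_def vdot_inv_le mat_add_mv smat_mv vec_add_le_iff)
  have thle: "\<And>\<mu>. \<mu> \<noteq> 0 \<Longrightarrow> \<theta> \<le> \<mu> \<longleftrightarrow> (Trc (smat (inverse \<mu>) A + B) \<le> 1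
       \<and> vdot (vinv q) (kstar (smat (inverse \<mu>) A + B) *v p) \<le> \<mu> * \<mu> \<and> r \<le> \<mu>)"
    unfolding \<theta>_def by (rule theta_le_iff[OF _ TrB])
  have lam0: "A = 0 \<Longrightarrow> lam = 0"
  proof -
    assume A0: "A = 0"
    have "\<forall>k\<in>{1..CARD('n)}. iroot k (tr (mpow A k)) = 0"
      using A0 by (auto simp: mpow_zero tr_def iroot_zero)
    then show "lam = 0" using lam by simp
  qed
  have Fnz: "\<And>x. regular x \<Longrightarrow> F x \<noteq> 0"
  proof
    fix x assume x: "regular x" and F0: "F x = 0"
    have xnz: "\<And>i. x$i \<noteq> 0" using x by (simp add: regular_def)
    have "F x \<le> 0" using F0 by simp
    then have le: "vdot (vinv x) (A *v x) \<le> 0" "vdot (vinv x) p \<le> 0" "r \<le> 0"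
      by (simp_all add: F_def)
    have h1: "vdot (vinv x) (A *v x) = 0" "vdot (vinv x) p = 0" "r = 0"
      using le by (auto intro: order.antisym)
    have A0: "A = 0"
    proof -
      have "\<And>i j. A$i$j = 0"
      proof -
        fix i j
        have "inverse (x$i) * (A$i$j * x$j) \<le> inverse (x$i) * (A *v x)$i"
          unfolding matrix_vector_mult_def by (intro mult_left_mono') (simp, rule mem_le_sum, auto)
        also have "\<dots> \<le> 0" using vdot_mem[of "vinv x" i "A *v x"] h1(1) by (simp add: vinv_def)
        finally have "inverse (x$i) * (A$i$j * x$j) = 0" by (simp add: order.antisym)
        then show "A$i$j = 0" using xnz inverse_nz by (auto simp: mult_eq_0)
      qed
      then show ?thesis by (simp add: vec_eq_iff)
    qed
    have p0: "p = 0"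
    proof -
      have "\<And>i. p$i = 0"
      proof -
        fix i
        have "inverse (x$i) * p$i \<le> 0" using vdot_mem[of "vinv x" i p] h1(2) by (simp add: vinv_def)
        then have "inverse (x$i) * p$i = 0" by (simp add: order.antisym)
        then show "p$i = 0" using xnz inverse_nz by (auto simp: mult_eq_0)
      qed
      then show ?thesis by (simp add: vec_eq_iff)
    qed
    have "vdot (vinv q) p = 0" using p0 by (simp add: vdot_def)
    then show False using pos lam0[OF A0] h1(3) by (simp add: iroot_zero)
  qed
  have thnz: "\<theta> \<noteq> 0"
  proof
    assume th0: "\<theta> = 0"
    have tl: "\<theta> \<le> 0" using th0 by simp
    have r0: "r = 0" using tl unfolding \<theta>_def by (auto intro: order.antisym)
    have s1: "(\<Sum>k\<in>{1..CARD('n)}. iroot k (tr (Smat A B k))) \<le> 0" using tl unfolding \<theta>_def by simp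
    have s2: "(\<Sum>k\<in>{0..<CARD('n)}. iroot (k + 2) (vdot (vinv q) (Tmat A B k *v p))) \<le> 0" using tl unfolding \<theta>_def by simp
    have "\<forall>k\<in>{1..CARD('n)}. iroot k (tr (mpow A k)) = 0"
    proof
      fix k assume k: "k \<in> {1..CARD('n)}"
      have "tr (mpow A k) \<le> tr (Smat A B k)"
        unfolding Smat_def mprod_rep0[symmetric, of A k B]
        by (rule tr_mono, rule mat_mem_le_sum[OF finite_Iset]) (auto simp: sum_list_replicate)
      also have "\<dots> \<le> 0"
        using s1 k iroot_le_iff[of k "tr (Smat A B k)" 0] by (auto simp: sum_le_iff zero_power)
      finally have "tr (mpow A k) = 0" by (simp add: order.antisym)
      then show "iroot k (tr (mpow A k)) = 0" using k by (simp add: iroot_zero)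
    qed
    then have l0: "lam = 0" using lam by simp
    have n0: "0 \<in> {0..<CARD('n)}" by simp
    have i2: "iroot (0 + 2) (vdot (vinv q) (Tmat A B 0 *v p)) \<le> 0"
      using s2 n0 unfolding sum_le_iff[OF finite_atLeastLessThan] by blast
    have "vdot (vinv q) p \<le> vdot (vinv q) (Tmat A B 0 *v p)"
      by (simp add: Tmat_def vdot_mono2 mv_ge one_le_kstar)
    also have "\<dots> \<le> 0"
      using i2 iroot_le_iff[of "0+2" "vdot (vinv q) (Tmat A B 0 *v p)" 0] by simp
    finally have "vdot (vinv q) p = 0" by (simp add: order.antisym)
    then show False using pos l0 r0 by (simp add: iroot_zero)
  qed
  have cond: "Trc (smat (inverse \<theta>) A + B) \<le> 1" "vdot (vinv q) (C *v p) \<le> \<theta> * \<theta>" "r \<le> \<theta>"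
    using thle[OF thnz] by (auto simp: C_def)
  have claim2: "\<And>x. regular x \<Longrightarrow> B *v x \<le> x \<Longrightarrow> \<theta> \<le> F x"
  proof -
    fix x assume x: "regular x" and Bx: "B *v x \<le> x"
    define \<mu> where "\<mu> = F x"
    have mu: "\<mu> \<noteq> 0" using Fnz[OF x] by (simp add: \<mu>_def)
    have h: "(smat (inverse \<mu>) A + B) *v x \<le> x" "inverse \<mu> *s p \<le> x" "vdot (vinv q) x \<le> \<mu>" "r \<le> \<mu>"
      using feas[OF x mu] Bx by (auto simp: \<mu>_def)
    have T: "Trc (smat (inverse \<mu>) A + B) \<le> 1" using trc_of_sol[OF x h(1)] .
    have "inverse \<mu> * vdot (vinv q) (kstar (smat (inverse \<mu>) A + B) *v p)
        = vdot (vinv q) (kstar (smat (inverse \<mu>) A + B) *v (inverse \<mu> *s p))"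
      by (simp add: mv_smul vdot_smul)
    also have "\<dots> \<le> vdot (vinv q) x"
      by (rule vdot_mono2, rule kstar_mv_le[OF h(1) h(2)])
    also have "\<dots> \<le> \<mu>" by (rule h(3))
    finally have "vdot (vinv q) (kstar (smat (inverse \<mu>) A + B) *v p) \<le> \<mu> * \<mu>"
      using inv_mult_le[OF mu] by blast
    then show "\<theta> \<le> F x" using thle[OF mu] T h(4) by (simp add: \<mu>_def)
  qed
  define w where "w = vinv q v* C"
  have wnz: "\<And>j. w$j \<noteq> 0"
  proof
    fix j assume w0: "w$j = 0"
    have "inverse (q$j) * 1 \<le> inverse (q$j) * C$j$j"
      by (rule mult_left_mono', rule diag_ge) (simp add: C_def one_le_kstar)
    also have "\<dots> \<le> w$j"
      unfolding w_def vector_matrix_mult_def vinv_def by simp (rule mem_le_sum, auto)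
    finally have "inverse (q$j) = 0" using w0 by (simp add: order.antisym)
    then show False using qreg inverse_nz by (auto simp: regular_def)
  qed
  have wC: "\<And>y. vdot (vinv q) (C *v y) = vdot w y" by (simp add: w_def vdot_mv)
  have ub_iff: "\<And>y j. y \<le> \<theta> * inverse (w$j) \<longleftrightarrow> y * w$j \<le> \<theta>"
    using le_mult_inv[OF inverse_nz[OF wnz]] by (simp add: inverse_inverse')
  have Cstab: "(smat (inverse \<theta>) A + B) ** C \<le> C"
    unfolding C_def by (rule kstar_mul[OF cond(1)])
  have constr: "\<And>u. inverse \<theta> *s p \<le> u \<Longrightarrow> u \<le> \<theta> *s vinv w \<Longrightarrow> regular (C *v u)
      \<Longrightarrow> B *v (C *v u) \<le> C *v u \<and> F (C *v u) \<le> \<theta>"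
  proof -
    fix u assume lb: "inverse \<theta> *s p \<le> u" and ub: "u \<le> \<theta> *s vinv w" and reg: "regular (C *v u)"
    have "(smat (inverse \<theta>) A + B) *v (C *v u) = ((smat (inverse \<theta>) A + B) ** C) *v u"
      by (simp add: matrix_vector_mul_assoc)
    also have "\<dots> \<le> C *v u" using Cstab by (intro mv_mono) auto
    finally have h1: "(smat (inverse \<theta>) A + B) *v (C *v u) \<le> C *v u" .
    have h2: "inverse \<theta> *s p \<le> C *v u"
      using lb mv_ge[of C u] by (auto simp: C_def one_le_kstar intro: order_trans)
    have "vdot w u \<le> \<theta>"
      unfolding vdot_le_iff
    proof
      fix j
      have "u$j \<le> \<theta> * inverse (w$j)" using ub by (simp add: less_eq_vec_def vinv_def vector_scalar_mult_def)
      then show "w$j * u$j \<le> \<theta>" using ub_iff by (simp add: mult.commute)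
    qed
    then have h3: "vdot (vinv q) (C *v u) \<le> \<theta>" by (simp add: wC)
    show "B *v (C *v u) \<le> C *v u \<and> F (C *v u) \<le> \<theta>"
      using feas[OF reg thnz] h1 h2 h3 cond(3) by blast
  qed
  have ex: "\<exists>x. regular x \<and> B *v x \<le> x \<and> F x = \<theta>"
  proof -
    define u0 where "u0 = \<theta> *s vinv w"
    have lb: "inverse \<theta> *s p \<le> u0"
    proof -
      have "\<And>j. inverse \<theta> * p$j \<le> \<theta> * inverse (w$j)"
      proof -
        fix j
        have "p$j * w$j \<le> vdot w p" using vdot_mem[of w j p] by (simp add: mult.commute)
        also have "\<dots> \<le> \<theta> * \<theta>" using cond(2) by (simp add: wC)
        finally have "p$j \<le> (\<theta> * \<theta>) * inverse (w$j)"
          using le_mult_inv[OF inverse_nz[OF wnz], of "p$j" "\<theta> * \<theta>"] by (simp add: inverse_inverse')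
        then show "inverse \<theta> * p$j \<le> \<theta> * inverse (w$j)"
          using inv_mult_le[OF thnz] by (simp add: mult.assoc)
      qed
      then show ?thesis by (simp add: u0_def less_eq_vec_def vinv_def vector_scalar_mult_def)
    qed
    have reg: "regular (C *v u0)"
      unfolding regular_def
    proof
      fix j
      have u0j: "u0$j \<noteq> 0" using thnz inverse_nz[OF wnz[of j]]
        by (simp add: u0_def vinv_def vector_scalar_mult_def mult_eq_0)
      have "u0 \<le> C *v u0" by (rule mv_ge) (simp add: C_def one_le_kstar)
      then have "u0$j \<le> (C *v u0)$j" by (simp add: less_eq_vec_def)
      then show "(C *v u0)$j \<noteq> 0" using u0j by (auto simp: order.antisym)
    qed
    have "B *v (C *v u0) \<le> C *v u0 \<and> F (C *v u0) \<le> \<theta>"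
      using constr[OF lb _ reg] by (simp add: u0_def)
    then show ?thesis using claim2[OF reg] by (intro exI[of _ "C *v u0"]) (auto simp: reg order.antisym)
  qed
  have char: "\<And>x. regular x \<Longrightarrow> ((B *v x \<le> x \<and> F x = \<theta>) \<longleftrightarrow>
      (\<exists>u. inverse \<theta> *s p \<le> u \<and> u \<le> \<theta> *s vinv w \<and> x = C *v u))"
  proof -
    fix x :: "'a^'n" assume x: "regular x"
    show "(B *v x \<le> x \<and> F x = \<theta>) \<longleftrightarrow> (\<exists>u. inverse \<theta> *s p \<le> u \<and> u \<le> \<theta> *s vinv w \<and> x = C *v u)"
    proof
      assume a: "B *v x \<le> x \<and> F x = \<theta>"
      have h: "(smat (inverse \<theta>) A + B) *v x \<le> x" "inverse \<theta> *s p \<le> x" "vdot (vinv q) x \<le> \<theta>"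
        using feas[OF x thnz] a by auto
      have "C *v x \<le> x" unfolding C_def by (rule kstar_mv_le[OF h(1) order_refl])
      moreover have "x \<le> C *v x" by (rule mv_ge) (simp add: C_def one_le_kstar)
      ultimately have xC: "x = C *v x" by (simp add: order.antisym)
      have "x \<le> \<theta> *s vinv w"
      proof -
        have "\<And>j. x$j \<le> \<theta> * inverse (w$j)"
        proof -
          fix j
          have "x$j * w$j \<le> vdot w x" using vdot_mem[of w j x] by (simp add: mult.commute)
          also have "\<dots> = vdot (vinv q) x" using wC[of x] xC by simp
          also have "\<dots> \<le> \<theta>" by (rule h(3))
          finally show "x$j \<le> \<theta> * inverse (w$j)" using ub_iff by simp
        qed
        then show ?thesis by (simp add: less_eq_vec_def vinv_def vector_scalar_mult_def)
      qed
      then show "\<exists>u. inverse \<theta> *s p \<le> u \<and> u \<le> \<theta> *s vinv w \<and> x = C *v u"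
        using h(2) xC by blast
    next
      assume "\<exists>u. inverse \<theta> *s p \<le> u \<and> u \<le> \<theta> *s vinv w \<and> x = C *v u"
      then obtain u where u: "inverse \<theta> *s p \<le> u" "u \<le> \<theta> *s vinv w" "x = C *v u" by blast
      have "B *v x \<le> x \<and> F x \<le> \<theta>" using constr[OF u(1) u(2)] x u(3) by simp
      then show "B *v x \<le> x \<and> F x = \<theta>" using claim2[OF x] by (auto simp: order.antisym)
    qed
  qed
  have res: "(\<exists>x. regular x \<and> B *v x \<le> x \<and> F x = \<theta>)
          \<and> (\<forall>x. regular x \<and> B *v x \<le> x \<longrightarrow> \<theta> \<le> F x)
          \<and> (\<forall>x. regular x \<longrightarrow>
               ((B *v x \<le> x \<and> F x = \<theta>) \<longleftrightarrow>
                (\<exists>u. inverse \<theta> *s p \<le> u \<and> u \<le> \<theta> *s vinv (vinv q v* C) \<and> x = C *v u)))"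
    using ex claim2 char by (auto simp: w_def)
  show ?thesis
    using res unfolding Let_def C_def \<theta>_def F_def .
qed

end
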